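(* Let $d$ be a positive integer. (1) If $D=T^{2d}+T^{e}$ with $0\le e<d$, then the partial quotients $a_h$ ($h\ge0$) of the continued fraction expansion of $\sqrt D$ satisfy $\deg a_h=d$ for $h$ even and $\deg a_h=d-e$ for $h$ odd. (2) If $D=T^{2d}+T^{d}$, then all partial quotients $a_h$ ($h\ge0$) of the continued fraction expansion of $\sqrt D$ have degree $d$. Moreover, in both cases $l(\sqrt D)=d$.
   Context: $\mathbb{Q}((1/T))$ is the field of formal Laurent series $\sum_{i=-\infty}^m c_iT^i$, $c_i\in\mathbb{Q}$; $\deg$ of a nonzero series is the exponent of its leading term, $\deg 0=-\infty$. $\sqrt D\in\mathbb{Q}((1/T))$ denotes the square root $T^d(1+\dots)$ of $D$. The continued fraction expansion $[a_0,a_1,\dots]$ of $\alpha$ is given by $\alpha_0=\alpha$, $a_i=\lfloor\alpha_i\rfloor$ (the sum of the terms of nonnegative degree), $\alpha_{i+1}=(\alpha_i-a_i)^{-1}$. For $\alpha\notin\mathbb{Q}(T)$, the Lagrange constant $l(\alpha)\in\mathbb{Z}\cup\{\infty\}$ is the supremum of integers $k$ such that $\deg(\alpha-p/q)\le-2\deg q-k$ for infinitely many $p,q\in\mathbb{Q}[T]$, $q\ne0$. *)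

theory Defs
  imports "HOL-Computational_Algebra.Computational_Algebra" "HOL-Library.Extended_Real"
begin

text \<open>Q((1/T)) is modelled as rat fls (Laurent series in X with finitely many
negative powers) via T = X^(-1), i.e. T = fls_X_inv.  Then the degree (in T)
of a nonzero series x is minus its subdegree in X.\<close>

abbreviation T :: "rat fls" where "T \<equiv> fls_X_inv"

text \<open>degree in T of a nonzero series (only used on nonzero arguments).\<close>
definition fdeg :: "rat fls \<Rightarrow> int" where
  "fdeg x = - fls_subdegree x"

definition tpoly :: "rat poly \<Rightarrow> rat fls" where
  "tpoly p = (\<Sum>i\<le>degree p. fls_const (coeff p i) * T ^ i)"

text \<open>Polynomial part: sum of the terms of nonnegative degree in T, as a polynomial in T.\<close>
definition fls_floor :: "rat fls \<Rightarrow> rat poly" where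
  "fls_floor x = Poly (map (\<lambda>i. fls_nth x (- int i)) [0..<Suc (nat (fdeg x))])"

definition fls_sqrt :: "rat fls \<Rightarrow> rat fls" where
  "fls_sqrt D = (THE s. s * s = D \<and> fls_nth s (fls_subdegree s) = 1)"

primrec cf_rem :: "rat fls \<Rightarrow> nat \<Rightarrow> rat fls" where
  "cf_rem \<alpha> 0 = \<alpha>"
| "cf_rem \<alpha> (Suc i) = inverse (cf_rem \<alpha> i - tpoly (fls_floor (cf_rem \<alpha> i)))"

definition cf_pq :: "rat fls \<Rightarrow> nat \<Rightarrow> rat poly" where
  "cf_pq \<alpha> i = fls_floor (cf_rem \<alpha> i)"

text \<open>Lagrange constant: supremum of integers k such that infinitely many distinct
rational functions p/q satisfy deg(alpha - p/q) <= -2 deg q - k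
(deg 0 = -infinity, so alpha - p/q = 0 counts as satisfying it).\<close>
definition lagrange_const :: "rat fls \<Rightarrow> ereal" where
  "lagrange_const \<alpha> = Sup {ereal (of_int k) | k.
     infinite {tpoly p / tpoly q | p q. q \<noteq> 0 \<and>
       (\<alpha> - tpoly p / tpoly q = 0 \<or>
        fdeg (\<alpha> - tpoly p / tpoly q) \<le> - 2 * int (degree q) - k)}}"

end

theory Submission
  imports Defs
begin

unbundle fps_syntax



lemma tpoly_nth: "tpoly p $$ n = (if n \<le> 0 then coeff p (nat (-n)) else 0)"
proof -
  have "tpoly p $$ n = (\<Sum>i\<le>degree p. (fls_const (coeff p i) * T ^ i) $$ n)"
    unfolding tpoly_def by (rule fls_nth_sum)
  also have "\<dots> = (\<Sum>i\<le>degree p. (if n = - int i then coeff p i else 0))"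
    by (intro sum.cong refl) simp
  also have "\<dots> = (if n \<le> 0 then coeff p (nat (-n)) else 0)"
  proof (cases "n \<le> 0")
    case True
    then have eq: "\<And>i. (n = - int i) = (i = nat (-n))" by auto
    show ?thesis using True
      by (simp add: eq sum.delta coeff_eq_0 not_le)
  next
    case False
    then show ?thesis by auto
  qed
  finally show ?thesis .
qed

lemma tpoly_add: "tpoly (p + q) = tpoly p + tpoly q"
  by (rule fls_eqI) (simp add: tpoly_nth)

lemma tpoly_diff: "tpoly (p - q) = tpoly p - tpoly q"
  by (rule fls_eqI) (simp add: tpoly_nth)

lemma tpoly_0 [simp]: "tpoly 0 = 0"
  by (rule fls_eqI) (simp add: tpoly_nth)

lemma tpoly_const: "tpoly [:c:] = fls_const c"
  by (rule fls_eqI) (auto simp: tpoly_nth coeff_pCons split: nat.splits)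

lemma tpoly_smult: "tpoly (smult c p) = fls_const c * tpoly p"
  by (rule fls_eqI) (simp add: tpoly_nth)

lemma tpoly_pCons: "tpoly (pCons a p) = fls_const a + T * tpoly p"
proof (rule fls_eqI)
  fix n
  have "(T * tpoly p) $$ n = tpoly p $$ (n + 1)"
    using fls_X_inv_times_conv_shift(1)[of "tpoly p"] by simp
  then show "tpoly (pCons a p) $$ n = (fls_const a + T * tpoly p) $$ n"
  proof (cases "n < 0")
    case True
    then have "nat (-n) = Suc (nat (- (n+1)))" by simp
    then show ?thesis using True \<open>(T * tpoly p) $$ n = tpoly p $$ (n + 1)\<close>
      by (simp add: tpoly_nth coeff_pCons)
  next
    case False
    then show ?thesis using \<open>(T * tpoly p) $$ n = tpoly p $$ (n + 1)\<close>
      by (cases "n = 0") (simp_all add: tpoly_nth)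
  qed
qed

lemma tpoly_mult: "tpoly (p * q) = tpoly p * tpoly q"
proof (induction p)
  case 0
  then show ?case by simp
next
  case (pCons a p)
  have "tpoly (pCons a p * q) = tpoly (smult a q + pCons 0 (p * q))" by simp
  also have "\<dots> = fls_const a * tpoly q + T * (tpoly p * tpoly q)"
    by (simp add: tpoly_add tpoly_smult tpoly_pCons pCons.IH)
  also have "\<dots> = tpoly (pCons a p) * tpoly q"
    by (simp add: tpoly_pCons algebra_simps)
  finally show ?case .
qed

lemma tpoly_1 [simp]: "tpoly 1 = 1"
  using tpoly_const[of 1] by (simp add: one_pCons)

lemma tpoly_monom: "tpoly (monom c n) = fls_const c * T ^ n"
  by (rule fls_eqI) (auto simp: tpoly_nth coeff_monom)

lemma tpoly_subdegree:
  assumes "p \<noteq> 0" shows "fls_subdegree (tpoly p) = - int (degree p)"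
  by (rule fls_subdegree_eqI) (auto simp: tpoly_nth assms coeff_eq_0)

lemma tpoly_eq_0_iff: "tpoly p = 0 \<longleftrightarrow> p = 0"
proof
  assume "tpoly p = 0"
  then have "\<And>i. coeff p i = 0" using tpoly_nth[of p "- int i" for i]
    by (metis fls_zero_nth nat_int neg_0_le_iff_le of_nat_0_le_iff minus_minus)
  then show "p = 0" by (simp add: poly_eqI)
qed simp

lemma coeff_fls_floor: "coeff (fls_floor x) i = x $$ (- int i)"
proof (cases "i < Suc (nat (fdeg x))")
  case True
  then show ?thesis by (simp add: fls_floor_def nth_default_def del: upt_Suc)
next
  case False
  then have "- int i < fls_subdegree x" unfolding fdeg_def by auto
  then show ?thesis using False by (simp add: fls_floor_def nth_default_def)
qed

lemma fls_floor_eqI: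
  assumes "\<And>n. n \<le> 0 \<Longrightarrow> (x - tpoly P) $$ n = 0"
  shows "fls_floor x = P"
proof (rule poly_eqI)
  fix i
  have "(x - tpoly P) $$ (- int i) = 0" using assms by simp
  then show "coeff (fls_floor x) i = coeff P i"
    by (simp add: coeff_fls_floor tpoly_nth)
qed

lemma small_nth: "r = 0 \<or> fls_subdegree r > 0 \<Longrightarrow> n \<le> 0 \<Longrightarrow> r $$ n = 0"
  by auto




lemma fls_sqrt_eqI:
  assumes "s * s = D" "s $$ fls_subdegree s = 1"
  shows "fls_sqrt D = s"
  unfolding fls_sqrt_def
proof (rule the_equality)
  show "s * s = D \<and> s $$ fls_subdegree s = 1" using assms by simp
next
  fix t assume t: "t * t = D \<and> t $$ fls_subdegree t = 1"
  have "(t - s) * (t + s) = 0" using t assms by (simp add: algebra_simps)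
  then have "t = s \<or> t = - s" by (auto simp: eq_neg_iff_add_eq_0)
  then show "t = s"
  proof
    assume "t = - s"
    then have "t $$ fls_subdegree t = - 1" using assms by simp
    then show "t = s" using t by simp
  qed
qed

lemma X_inv_X: "(T :: rat fls) * fls_X = 1"
  by (simp add: fls_X_inv_times_conv_shift)

lemma sqrt_exists:
  assumes "0 < m" "m \<le> 2 * d"
  shows "\<exists>s. s * s = T ^ (2 * d) + T ^ (2 * d - m) \<and> fls_subdegree s = - int d \<and> s $$ (- int d) = 1"
proof -
  define a :: "rat fps" where "a = 1 + fps_X ^ m"
  have a0: "a $ 0 = 1" using assms by (simp add: a_def)
  define r where "r = fps_radical (\<lambda>_ _. 1) 2 a"
  have "r ^ 2 = a"
    using power_radical[of a "\<lambda>_ _. 1" 1] a0 by (simp add: r_def numeral_2_eq_2)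
  then have r2: "fps_to_fls r * fps_to_fls r = 1 + fls_X ^ m"
    by (metis a_def fps_to_fls_power power2_eq_square fps_to_fls_plus fps_one_to_fls fps_X_to_fls)
  have r0: "r $ 0 = 1" by (simp add: r_def a0)
  define s where "s = T ^ d * fps_to_fls r"
  have tt: "T ^ d * T ^ d = T ^ (2 * d)" by (simp add: mult_2 power_add)
  have "s * s = (T ^ d * T ^ d) * (fps_to_fls r * fps_to_fls r)"
    by (simp add: s_def mult_ac)
  also have "\<dots> = T ^ (2 * d) * (1 + fls_X ^ m)" by (simp only: tt r2)
  also have "\<dots> = T ^ (2 * d) + T ^ (2 * d - m) * (T ^ m * fls_X ^ m)"
  proof -
    have "T ^ (2 * d) = T ^ (2 * d - m) * T ^ m" using assms by (simp add: power_add[symmetric])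
    then show ?thesis by (simp add: distrib_left mult.assoc)
  qed
  also have "T ^ m * fls_X ^ m = 1"
    by (simp add: X_inv_X flip: power_mult_distrib)
  finally have ss: "s * s = T ^ (2 * d) + T ^ (2 * d - m)" by simp
  have sd: "s = fls_shift (int d) (fps_to_fls r)"
    by (simp add: s_def fls_X_inv_power_times_conv_shift)
  have n0: "fps_to_fls r $$ 0 = 1" using r0 by (simp only: fps_to_fls_nth) simp
  have nz: "fps_to_fls r \<noteq> 0"
  proof
    assume "fps_to_fls r = 0"
    then have "fps_to_fls r $$ 0 = 0" by (simp only: fls_zero_nth)
    then show False using n0 by simp
  qed
  have "subdegree r = 0" using r0 by (intro subdegree_eq_0) simp
  then have "fls_subdegree (fps_to_fls r) = 0" by (simp only: fls_subdegree_fls_to_fps of_nat_0)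
  then have "fls_subdegree s = - int d" unfolding sd using fls_shift_subdegree[OF nz] by simp
  moreover have "s $$ (- int d) = 1" unfolding sd using n0 by (simp only: fls_shift_nth) (simp add: n0)
  ultimately show ?thesis using ss by blast
qed




lemma tpoly_nonpos_subdegree: "tpoly p \<noteq> 0 \<Longrightarrow> fls_subdegree (tpoly p) \<le> 0"
  using tpoly_subdegree tpoly_eq_0_iff by fastforce

lemma approx_bound:
  fixes s :: "rat fls"
  assumes ss: "s * s = tpoly Dp" and sd: "fls_subdegree s = - int d" and s0: "s \<noteq> 0"
    and q0: "q \<noteq> 0" and x0: "s - tpoly p / tpoly q \<noteq> 0"
  shows "fls_subdegree (s - tpoly p / tpoly q) \<le> 2 * int (degree q) + int d"
proof (rule ccontr)
  define Q where "Q = tpoly q"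
  define P where "P = tpoly p"
  define x where "x = s - P / Q"
  assume "\<not> ?thesis"
  then have big: "fls_subdegree x > 2 * int (degree q) + int d" by (simp add: x_def P_def Q_def)
  have Q0: "Q \<noteq> 0" using q0 by (simp add: Q_def tpoly_eq_0_iff)
  have sQ: "fls_subdegree Q = - int (degree q)" using q0 by (simp add: Q_def tpoly_subdegree)
  have x0': "x \<noteq> 0" using x0 by (simp add: x_def P_def Q_def)
  define y1 where "y1 = Q * x"
  have y1eq: "y1 = Q * s - P" using Q0 by (simp add: y1_def x_def algebra_simps)
  have y10: "y1 \<noteq> 0" using Q0 x0' by (simp add: y1_def)
  have sy1: "fls_subdegree y1 > int (degree q) + int d"
    using big Q0 x0' sQ by (simp add: y1_def)
  define z where "z = 2 * Q * s"
  have z0: "z \<noteq> 0" using Q0 s0 by (simp add: z_def)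
  have sz: "fls_subdegree z = - int (degree q) - int d"
    using Q0 s0 sQ sd by (simp add: z_def)
  define y2 where "y2 = z - y1"
  have y2eq: "y2 = Q * s + P" by (simp add: y2_def z_def y1eq algebra_simps mult_2)
  have sy2: "fls_subdegree y2 = - int (degree q) - int d"
    unfolding y2_def using fls_subdegree_diff_eq1[OF z0, of y1] sz sy1 by simp
  have y20: "y2 \<noteq> 0"
  proof
    assume "y2 = 0"
    then have "z = y1" by (simp add: y2_def)
    then show False using sz sy1 by simp
  qed
  have "y1 * y2 = Q * Q * (s * s) - P * P" by (simp add: y1eq y2eq algebra_simps)
  also have "\<dots> = tpoly (q * q * Dp - p * p)" by (simp add: ss Q_def P_def tpoly_mult tpoly_diff)
  finally have prod: "y1 * y2 = tpoly (q * q * Dp - p * p)" .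
  have "y1 * y2 \<noteq> 0" using y10 y20 by simp
  then have "fls_subdegree (y1 * y2) \<le> 0" using prod tpoly_nonpos_subdegree by metis
  moreover have "fls_subdegree (y1 * y2) = fls_subdegree y1 + fls_subdegree y2"
    using y10 y20 by simp
  ultimately show False using sy1 sy2 by simp
qed




primrec pqseq :: "rat poly \<Rightarrow> rat poly \<Rightarrow> rat poly \<Rightarrow> nat \<Rightarrow> rat poly \<times> rat poly" where
  "pqseq p0 q0 Dp 0 = (1, 0)"
| "pqseq p0 q0 Dp (Suc n) = (p0 * fst (pqseq p0 q0 Dp n) + Dp * q0 * snd (pqseq p0 q0 Dp n),
                             p0 * snd (pqseq p0 q0 Dp n) + q0 * fst (pqseq p0 q0 Dp n))"

lemma pqseq_pow:
  fixes s :: "rat fls"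
  assumes ss: "s * s = tpoly Dp"
  shows "tpoly (fst (pqseq p0 q0 Dp n)) + tpoly (snd (pqseq p0 q0 Dp n)) * s
           = (tpoly p0 + tpoly q0 * s) ^ n
       \<and> tpoly (fst (pqseq p0 q0 Dp n)) - tpoly (snd (pqseq p0 q0 Dp n)) * s
           = (tpoly p0 - tpoly q0 * s) ^ n"
proof (induction n)
  case 0
  then show ?case by simp
next
  case (Suc n)
  define A where "A = tpoly (fst (pqseq p0 q0 Dp n))"
  define B where "B = tpoly (snd (pqseq p0 q0 Dp n))"
  define P where "P = tpoly p0"
  define Q where "Q = tpoly q0"
  have IH: "A + B * s = (P + Q * s) ^ n" "A - B * s = (P - Q * s) ^ n"
    using Suc.IH by (simp_all add: A_def B_def P_def Q_def)
  have e1: "tpoly (fst (pqseq p0 q0 Dp (Suc n))) = P * A + (s * s) * Q * B"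
    by (simp add: A_def B_def P_def Q_def tpoly_add tpoly_mult ss)
  have e2: "tpoly (snd (pqseq p0 q0 Dp (Suc n))) = P * B + Q * A"
    by (simp add: A_def B_def P_def Q_def tpoly_add tpoly_mult)
  have "P * A + (s * s) * Q * B + (P * B + Q * A) * s = (P + Q * s) * (A + B * s)"
    by (simp add: algebra_simps)
  moreover have "P * A + (s * s) * Q * B - (P * B + Q * A) * s = (P - Q * s) * (A - B * s)"
    by (simp add: algebra_simps)
  ultimately show ?case using IH e1 e2 by (simp add: P_def Q_def)
qed

lemma lagrange_main:
  fixes s :: "rat fls" and d :: nat
  assumes ss: "s * s = tpoly Dp" and sd: "fls_subdegree s = - int d" and s0: "s \<noteq> 0"
    and uu: "(tpoly p0 + tpoly q0 * s) * (tpoly p0 - tpoly q0 * s) = 1"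
    and ub: "fls_subdegree (tpoly p0 - tpoly q0 * s) > 0"
  shows "lagrange_const s = ereal (of_nat d)"
proof -
  define Aset where "Aset = (\<lambda>k::int. {tpoly p / tpoly q | p q. q \<noteq> 0 \<and>
       (s - tpoly p / tpoly q = 0 \<or>
        fdeg (s - tpoly p / tpoly q) \<le> - 2 * int (degree q) - k)})"
  have lc: "lagrange_const s = Sup {ereal (of_int k) | k. infinite (Aset k)}"
    unfolding lagrange_const_def Aset_def by simp
  have fin: "Aset k \<subseteq> {s}" if "k > int d" for k
  proof
    fix v assume "v \<in> Aset k"
    then obtain p q where v: "v = tpoly p / tpoly q" "q \<noteq> 0"
      "s - tpoly p / tpoly q = 0 \<or> fdeg (s - tpoly p / tpoly q) \<le> - 2 * int (degree q) - k"
      unfolding Aset_def by blast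
    show "v \<in> {s}"
    proof (cases "s - tpoly p / tpoly q = 0")
      case True then show ?thesis using v by simp
    next
      case False
      with v have "fls_subdegree (s - tpoly p / tpoly q) \<ge> 2 * int (degree q) + k"
        by (simp add: fdeg_def)
      moreover have "fls_subdegree (s - tpoly p / tpoly q) \<le> 2 * int (degree q) + int d"
        by (rule approx_bound[OF ss sd s0 v(2) False])
      ultimately show ?thesis using that by simp
    qed
  qed
  define u where "u = tpoly p0 + tpoly q0 * s"
  define w where "w = tpoly p0 - tpoly q0 * s"
  define m where "m = fls_subdegree w"
  have m0: "m > 0" using ub by (simp add: m_def w_def)
  have u0: "u \<noteq> 0" and w0: "w \<noteq> 0" using uu by (auto simp: u_def w_def)
  have uw: "u * w = 1" using uu by (simp add: u_def w_def)
  define An where "An = (\<lambda>n. tpoly (fst (pqseq p0 q0 Dp n)))"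
  define Bn where "Bn = (\<lambda>n. snd (pqseq p0 q0 Dp n))"
  have pw: "An n + tpoly (Bn n) * s = u ^ n" "An n - tpoly (Bn n) * s = w ^ n" for n
    using pqseq_pow[OF ss, of p0 q0 n] by (simp_all add: An_def Bn_def u_def w_def)
  have key: "Bn n \<noteq> 0 \<and> int (degree (Bn n)) = int n * m - int d
      \<and> s - An n / tpoly (Bn n) \<noteq> 0
      \<and> fls_subdegree (s - An n / tpoly (Bn n)) = 2 * int n * m - int d" if n1: "n \<ge> 1" for n
  proof -
    have swn: "fls_subdegree (w ^ n) = int n * m" by (simp add: fls_subdegree_pow m_def)
    have "u ^ n * w ^ n = 1" by (simp add: uw flip: power_mult_distrib)
    moreover have "u ^ n \<noteq> 0" "w ^ n \<noteq> 0" using u0 w0 by simp_all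
    ultimately have sun: "fls_subdegree (u ^ n) = - (int n * m)"
      using swn by (metis fls_subdegree_mult fls_one_subdegree add.commute add_right_cancel
          diff_0 diff_add_cancel minus_add_cancel)
    have lt: "fls_subdegree (u ^ n) < fls_subdegree (w ^ n)" using sun swn m0 n1 by simp
    have eq2: "2 * tpoly (Bn n) * s = u ^ n - w ^ n"
      by (simp flip: pw add: algebra_simps mult_2)
    have sdiff: "fls_subdegree (u ^ n - w ^ n) = - (int n * m)"
      using fls_subdegree_diff_eq1[OF \<open>u ^ n \<noteq> 0\<close> lt] sun by simp
    have nz: "u ^ n - w ^ n \<noteq> 0"
    proof
      assume "u ^ n - w ^ n = 0"
      then have "u ^ n = w ^ n" by simp
      then show False using lt by simp
    qed
    then have B0: "tpoly (Bn n) \<noteq> 0" using eq2 by auto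
    then have Bn0: "Bn n \<noteq> 0" by (simp add: tpoly_eq_0_iff)
    have "fls_subdegree (2 * tpoly (Bn n) * s) = - int (degree (Bn n)) - int d"
      using B0 s0 sd tpoly_subdegree[OF Bn0] by simp
    then have degB: "int (degree (Bn n)) = int n * m - int d" using eq2 sdiff by simp
    have xe: "s - An n / tpoly (Bn n) = - (w ^ n) / tpoly (Bn n)"
    proof -
      have "An n = w ^ n + tpoly (Bn n) * s" using pw(2)[of n] by (simp add: algebra_simps)
      then show ?thesis using B0 by (simp add: field_simps)
    qed
    have "- (w ^ n) / tpoly (Bn n) \<noteq> 0" using B0 \<open>w ^ n \<noteq> 0\<close> by simp
    moreover have "fls_subdegree (- (w ^ n) / tpoly (Bn n)) = 2 * int n * m - int d"
      using fls_divide_subdegree[of "- (w ^ n)" "tpoly (Bn n)"] B0 \<open>w ^ n \<noteq> 0\<close>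
        swn tpoly_subdegree[OF Bn0] degB by simp
    ultimately show ?thesis using xe Bn0 degB by simp
  qed
  have inA: "An n / tpoly (Bn n) \<in> Aset (int d)" if "n \<ge> 1" for n
  proof -
    have "fdeg (s - An n / tpoly (Bn n)) \<le> - 2 * int (degree (Bn n)) - int d"
      using key[OF that] by (simp add: fdeg_def algebra_simps)
    then show ?thesis using key[OF that] unfolding Aset_def An_def by blast
  qed
  have inj: "inj_on (\<lambda>n. An n / tpoly (Bn n)) {1..}"
  proof (rule inj_onI)
    fix a b assume a: "a \<in> {1..}" and b: "b \<in> {1..}"
      and eq: "An a / tpoly (Bn a) = An b / tpoly (Bn b)"
    have "2 * int a * m - int d = 2 * int b * m - int d"
      using key[of a] key[of b] a b eq by auto
    then show "a = b" using m0 by simp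
  qed
  have "infinite ((\<lambda>n. An n / tpoly (Bn n)) ` {1..})"
    using inj finite_imageD infinite_Icc_iff by (metis infinite_Ici)
  moreover have "(\<lambda>n. An n / tpoly (Bn n)) ` {1..} \<subseteq> Aset (int d)" using inA by auto
  ultimately have infd: "infinite (Aset (int d))" using finite_subset by blast
  let ?S = "{ereal (of_int k) | k. infinite (Aset k)}"
  have mem: "ereal (of_nat d) \<in> ?S" using infd by (metis (mono_tags, lifting) mem_Collect_eq of_int_of_nat_eq)
  have ub': "y \<le> ereal (of_nat d)" if "y \<in> ?S" for y
  proof -
    from that obtain k where k: "y = ereal (of_int k)" "infinite (Aset k)" by blast
    have "k \<le> int d"
    proof (rule ccontr)
      assume "\<not> k \<le> int d"
      then have "Aset k \<subseteq> {s}" using fin by simp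
      then show False using k(2) finite_subset by blast
    qed
    then show ?thesis using k(1) by simp
  qed
  have "Sup ?S = ereal (of_nat d)"
    using Sup_least[of ?S "ereal (of_nat d)"] Sup_upper[OF mem] ub' by (meson antisym)
  then show ?thesis using lc by simp
qed



lemma ring_id1:
  fixes t :: "'a::comm_ring_1"
  shows "(2 * t^(2*a+e) + 1) * (2*t^(2*a+e)+1) - (2*t^a)*(2*t^a)*(t^(2*(a+e)) + t^e) = 1"
proof -
  define x where "x = t^(2*a+e)"
  have h1: "t^a * t^a * t^(2*(a+e)) = x * x"
    unfolding x_def by (simp only: power_add[symmetric]) (intro arg_cong[of _ _ "(^) t"], simp)
  have h2: "t^a * t^a * t^e = x"
    unfolding x_def by (simp only: power_add[symmetric]) (intro arg_cong[of _ _ "(^) t"], simp)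
  have "(2 * x + 1) * (2 * x + 1) - 4 * (t^a * t^a * t^(2*(a+e))) - 4 * (t^a * t^a * t^e) = 1"
    unfolding h1 h2 by (simp add: algebra_simps)
  then show ?thesis unfolding x_def by (simp add: algebra_simps)
qed



lemma c2: "fls_const (2::rat) = 1 + 1"
  by (metis fls_const_1 fls_plus_const one_add_one)

lemma floorI: "x - tpoly P = r \<Longrightarrow> fls_subdegree r > 0 \<Longrightarrow> fls_floor x = P"
  by (rule fls_floor_eqI) auto

lemma TX: "(T::rat fls) ^ e * fls_X ^ e = 1"
  by (simp add: X_inv_X flip: power_mult_distrib)

lemma case1:
  fixes d e :: nat
  assumes d0: "d > 0" and ed: "e < d"
  defines "\<alpha> \<equiv> fls_sqrt (T ^ (2 * d) + T ^ e)"
  shows "(\<forall>h. degree (cf_pq \<alpha> h) = (if even h then d else d - e)) \<and> lagrange_const \<alpha> = ereal (of_nat d)"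
proof -
  obtain s where ss0: "s * s = T ^ (2 * d) + T ^ (2 * d - (2 * d - e))"
    and sd: "fls_subdegree s = - int d" and sl: "s $$ (- int d) = 1"
    using sqrt_exists[of "2 * d - e" d] ed by auto
  have ss: "s * s = T ^ (2 * d) + T ^ e" using ss0 ed by simp
  have s0: "s \<noteq> 0" using sd d0 by auto
  have als: "\<alpha> = s" unfolding \<alpha>_def by (rule fls_sqrt_eqI[OF ss]) (simp add: sd sl)
  define sp where "sp = s + T ^ d"
  define sm where "sm = s - T ^ d"
  have ssp: "fls_subdegree sp = - int d"
  proof (rule fls_subdegree_eqI)
    show "sp $$ (- int d) \<noteq> 0" by (simp add: sp_def sl)
    fix k assume "k < - int d" then show "sp $$ k = 0" using sd by (simp add: sp_def)
  qed
  have sp0: "sp \<noteq> 0" using ssp d0 by auto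
  have TT: "T ^ d * T ^ d = T ^ (2 * d)" by (simp add: mult_2 power_add)
  have smsp: "sm * sp = T ^ e" by (simp add: sm_def sp_def algebra_simps ss TT)
  have sm0: "sm \<noteq> 0" using smsp by auto
  have ssm: "fls_subdegree sm = int d - int e"
    using arg_cong[OF smsp, of fls_subdegree] sm0 sp0 ssp by simp
  define A1 where "A1 = sp * fls_X ^ e"
  have invsm: "inverse sm = A1"
    by (rule inverse_unique) (simp add: A1_def mult.assoc[symmetric] smsp TX)
  have Tde: "T ^ d * fls_X ^ e = T ^ (d - e)"
  proof -
    have "T ^ d = T ^ (d - e) * T ^ e" using ed by (simp flip: power_add)
    then show ?thesis by (simp add: mult.assoc TX)
  qed
  have A1eq: "A1 - tpoly (monom 2 (d - e)) = sm * fls_X ^ e"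
  proof -
    have "A1 = sm * fls_X ^ e + (T ^ d * fls_X ^ e + T ^ d * fls_X ^ e)"
      by (simp add: A1_def sp_def sm_def algebra_simps)
    moreover have "T ^ d * fls_X ^ e + T ^ d * fls_X ^ e = fls_const 2 * T ^ (d - e)"
      by (simp only: Tde c2 distrib_right mult_1_left)
    ultimately show ?thesis by (simp add: tpoly_monom)
  qed
  have smX0: "sm * fls_X ^ e \<noteq> 0" using sm0 by simp
  have ssmX: "fls_subdegree (sm * fls_X ^ e) = int d" using sm0 ssm by simp
  have fl0: "fls_floor s = monom 1 d"
    by (rule floorI[of _ _ sm]) (use ssm ed in \<open>auto simp: tpoly_monom sm_def\<close>)
  have fl1: "fls_floor A1 = monom 2 (d - e)"
    by (rule floorI[OF A1eq]) (use ssmX d0 in auto)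
  have spm: "sp - tpoly (monom 2 d) = sm"
    by (simp add: sp_def sm_def tpoly_monom c2 algebra_simps)
  have fl2: "fls_floor sp = monom 2 d"
    by (rule floorI[OF spm]) (use ssm ed in auto)
  have rc: "sm * fls_X ^ e * sp = (sm * sp) * fls_X ^ e"
    by (simp only: mult.assoc mult.commute[of "fls_X ^ e" sp])
  have inv2: "inverse (sm * fls_X ^ e) = sp"
    by (rule inverse_unique) (simp only: rc smsp TX)
  have "s - tpoly (fls_floor s) = sm" by (simp add: fl0 tpoly_monom sm_def)
  then have r1: "cf_rem s (Suc 0) = A1" by (simp only: cf_rem.simps invsm)
  have r2: "cf_rem s (Suc (Suc 0)) = sp" by (simp only: cf_rem.simps(2)[of s "Suc 0"] r1 fl1 A1eq inv2)
  have per: "cf_rem s (2 * k + 1) = A1 \<and> cf_rem s (2 * k + 2) = sp" for k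
  proof (induction k)
    case 0 then show ?case using r1 r2 by (simp add: numeral_2_eq_2)
  next
    case (Suc k)
    have e1: "2 * Suc k + 1 = Suc (2 * k + 2)" "2 * Suc k + 2 = Suc (2 * Suc k + 1)" by simp_all
    have a: "cf_rem s (2 * Suc k + 1) = A1"
      using Suc.IH by (simp only: e1(1) cf_rem.simps(2)[of s "2 * k + 2"] fl2 spm invsm)
    then have "cf_rem s (2 * Suc k + 2) = sp"
      by (simp only: e1(2) cf_rem.simps(2)[of s "2 * Suc k + 1"] fl1 A1eq inv2)
    with a show ?case by simp
  qed
  have degs: "degree (cf_pq s h) = (if even h then d else d - e)" for h
  proof (cases h)
    case 0 then show ?thesis by (simp add: cf_pq_def fl0 degree_monom_eq)
  next
    case (Suc h')
    show ?thesis
    proof (cases "even h'")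
      case True
      then obtain k where "h' = 2 * k" by blast
      then have "h = 2 * k + 1" using Suc by simp
      then have "cf_pq s h = fls_floor A1" using per[of k] by (simp only: cf_pq_def)
      then show ?thesis using ed \<open>h = 2 * k + 1\<close> by (simp add: fl1 degree_monom_eq)
    next
      case False
      then obtain k where "h' = 2 * k + 1" using oddE by blast
      then have "h = 2 * k + 2" using Suc by simp
      then have "cf_pq s h = fls_floor sp" using per[of k] by (simp only: cf_pq_def)
      then show ?thesis using \<open>h = 2 * k + 2\<close> by (simp add: fl2 degree_monom_eq)
    qed
  qed
  define Dp where "Dp = monom (1::rat) (2 * d) + monom 1 e"
  have tD: "s * s = tpoly Dp" by (simp add: Dp_def ss tpoly_add tpoly_monom)
  define p0 where "p0 = monom (2::rat) (2 * d - e) + 1"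
  define q0 where "q0 = monom (2::rat) (d - e)"
  obtain a where a: "d = a + e" "a > 0" using ed by (metis add.commute less_imp_add_positive)
  have tp0: "tpoly p0 = 2 * T ^ (2 * a + e) + 1"
  proof -
    have "2 * d - e = 2 * a + e" using a by simp
    then show ?thesis by (simp only: p0_def tpoly_add tpoly_monom c2 tpoly_1) simp
  qed
  have tq0: "tpoly q0 = 2 * T ^ a"
    by (simp add: q0_def tpoly_monom c2 a)
  have uu: "(tpoly p0 + tpoly q0 * s) * (tpoly p0 - tpoly q0 * s) = 1"
  proof -
    have "(tpoly p0 + tpoly q0 * s) * (tpoly p0 - tpoly q0 * s)
          = tpoly p0 * tpoly p0 - tpoly q0 * tpoly q0 * (s * s)" by (simp add: algebra_simps)
    also have "\<dots> = 1" unfolding tp0 tq0 ss a by (rule ring_id1)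
    finally show ?thesis .
  qed
  define u where "u = tpoly p0 + tpoly q0 * s"
  have un: "u $$ n = coeff p0 (nat (- n)) * (if n \<le> 0 then 1 else 0) + 2 * s $$ (n + int a)" for n
  proof -
    have "tpoly q0 * s = fls_const 2 * (T ^ a * s)" by (simp add: q0_def tpoly_monom a mult.assoc)
    then show ?thesis by (simp add: u_def tpoly_nth fls_X_inv_power_times_conv_shift)
  qed
  have su: "fls_subdegree u = - int (2 * a + e)"
  proof (rule fls_subdegree_eqI)
    have "coeff p0 (2 * a + e) = 2" using a by (simp add: p0_def coeff_monom)
    moreover have "s $$ (- int (2 * a + e) + int a) = 1" using sl a by simp
    ultimately show "u $$ (- int (2 * a + e)) \<noteq> 0" by (simp add: un del: of_nat_add)
  next
    fix k assume k: "k < - int (2 * a + e)"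
    then have "coeff p0 (nat (- k)) = 0" using a by (simp add: p0_def coeff_monom)
    moreover have "s $$ (k + int a) = 0" using k sd a by simp
    ultimately show "u $$ k = 0" by (simp add: un)
  qed
  have ub: "fls_subdegree (tpoly p0 - tpoly q0 * s) > 0"
  proof -
    have "u \<noteq> 0" "tpoly p0 - tpoly q0 * s \<noteq> 0" using uu by (auto simp: u_def)
    then have "fls_subdegree u + fls_subdegree (tpoly p0 - tpoly q0 * s) = 0"
      using arg_cong[OF uu, of fls_subdegree] by (simp add: u_def)
    then show ?thesis using su a by simp
  qed
  have "lagrange_const s = ereal (of_nat d)"
    by (rule lagrange_main[OF tD sd s0 uu ub])
  then show ?thesis using degs als by simp
qed




lemma case2:
  fixes d :: nat
  assumes d0: "d > 0"
  defines "\<alpha> \<equiv> fls_sqrt (T ^ (2 * d) + T ^ d)"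
  shows "(\<forall>h. degree (cf_pq \<alpha> h) = d) \<and> lagrange_const \<alpha> = ereal (of_nat d)"
proof -
  obtain s where ss0: "s * s = T ^ (2 * d) + T ^ (2 * d - d)"
    and sd: "fls_subdegree s = - int d" and sl: "s $$ (- int d) = 1"
    using sqrt_exists[of d d] d0 by auto
  have ss: "s * s = T ^ (2 * d) + T ^ d" using ss0 by simp
  have s0: "s \<noteq> 0" using sd d0 by auto
  have als: "\<alpha> = s" unfolding \<alpha>_def by (rule fls_sqrt_eqI[OF ss]) (simp add: sd sl)
  define h where "h = fls_const (1/2 :: rat)"
  have hh: "h + h = 1" by (simp add: h_def fls_plus_const)
  have hh2: "h * h = fls_const (1/4)" by (simp add: h_def)
  define c where "c = T ^ d + h"
  define sp where "sp = s + c"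
  define sm where "sm = s - c"
  have ssp: "fls_subdegree sp = - int d"
  proof (rule fls_subdegree_eqI)
    show "sp $$ (- int d) \<noteq> 0" using d0 by (simp add: sp_def c_def h_def sl)
    fix k assume "k < - int d" then show "sp $$ k = 0" using sd d0 by (simp add: sp_def c_def h_def)
  qed
  have sp0: "sp \<noteq> 0" using ssp d0 by auto
  have TT: "T ^ d * T ^ d = T ^ (2 * d)" by (simp add: mult_2 power_add)
  have cc: "c * c = T ^ (2 * d) + T ^ d + fls_const (1/4)"
  proof -
    have "c * c = T ^ d * T ^ d + (h + h) * T ^ d + h * h" by (simp add: c_def algebra_simps)
    then show ?thesis by (simp only: TT hh hh2 mult_1_left)
  qed
  have smsp: "sm * sp = - fls_const (1/4)"
  proof -
    have "sm * sp = s * s - c * c" by (simp add: sm_def sp_def algebra_simps)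
    then show ?thesis by (simp add: ss cc)
  qed
  have sm0: "sm \<noteq> 0" using smsp by auto
  have ssm: "fls_subdegree sm = int d"
    using arg_cong[OF smsp, of fls_subdegree] sm0 sp0 ssp by simp
  define A1 where "A1 = fls_const (-4) * sp"
  have m4: "fls_const (-4) * (- fls_const (1/4)) = (1 :: rat fls)"
    by (simp only: mult_minus_right fls_const_mult_const) simp
  have invsm: "inverse sm = A1"
  proof (rule inverse_unique)
    have "sm * A1 = fls_const (-4) * (sm * sp)" by (simp add: A1_def algebra_simps)
    then show "sm * A1 = 1" by (simp only: smsp m4)
  qed
  have c2': "fls_const (2::rat) * T ^ d + fls_const 1 = T ^ d + c + h"
  proof -
    have "T ^ d + c + h = (1 + 1) * T ^ d + (h + h)" by (simp add: c_def algebra_simps)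
    then show ?thesis by (simp only: hh c2 fls_const_1)
  qed
  have tP0: "tpoly (monom 1 d + [:1/2:]) = c" by (simp add: tpoly_add tpoly_monom tpoly_const c_def h_def)
  have tP2: "tpoly (monom 2 d + [:1:]) = T ^ d + c + h" by (simp only: tpoly_add tpoly_monom tpoly_const c2')
  have tP1: "tpoly (smult (-4) (monom 2 d + [:1:])) = fls_const (-4) * (T ^ d + c + h)"
    by (simp only: tpoly_smult tP2)
  have spm: "sp - tpoly (monom 2 d + [:1:]) = sm"
  proof -
    have "sp - (T ^ d + c + h) = sm" by (simp add: sp_def sm_def c_def algebra_simps)
    then show ?thesis by (simp only: tP2)
  qed
  have A1eq: "A1 - tpoly (smult (-4) (monom 2 d + [:1:])) = fls_const (-4) * sm"
    by (simp only: tP1 A1_def flip: right_diff_distrib) (simp add: spm[unfolded tP2])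
  have smX0: "fls_const (-4) * sm \<noteq> 0" using sm0 by simp
  have ssmX: "fls_subdegree (fls_const (-4) * sm) = int d" using sm0 ssm by simp
  have fl0: "fls_floor s = monom 1 d + [:1/2:]"
    by (rule floorI[of _ _ sm]) (use ssm d0 in \<open>auto simp: tP0 sm_def\<close>)
  have fl1: "fls_floor A1 = smult (-4) (monom 2 d + [:1:])"
    by (rule floorI[OF A1eq]) (use ssmX d0 in auto)
  have fl2: "fls_floor sp = monom 2 d + [:1:]"
    by (rule floorI[OF spm]) (use ssm d0 in auto)
  have inv2: "inverse (fls_const (-4) * sm) = sp"
  proof (rule inverse_unique)
    have "fls_const (-4) * sm * sp = fls_const (-4) * (sm * sp)" by (simp only: mult.assoc)
    then show "fls_const (-4) * sm * sp = 1" by (simp only: smsp m4)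
  qed
  have "s - tpoly (fls_floor s) = sm" by (simp add: fl0 tP0 sm_def)
  then have r1: "cf_rem s (Suc 0) = A1" by (simp only: cf_rem.simps invsm)
  have r2: "cf_rem s (Suc (Suc 0)) = sp" by (simp only: cf_rem.simps(2)[of s "Suc 0"] r1 fl1 A1eq inv2)
  have per: "cf_rem s (2 * k + 1) = A1 \<and> cf_rem s (2 * k + 2) = sp" for k
  proof (induction k)
    case 0 then show ?case using r1 r2 by (simp add: numeral_2_eq_2)
  next
    case (Suc k)
    have e1: "2 * Suc k + 1 = Suc (2 * k + 2)" "2 * Suc k + 2 = Suc (2 * Suc k + 1)" by simp_all
    have a: "cf_rem s (2 * Suc k + 1) = A1"
      using Suc.IH by (simp only: e1(1) cf_rem.simps(2)[of s "2 * k + 2"] fl2 spm invsm)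
    then have "cf_rem s (2 * Suc k + 2) = sp"
      by (simp only: e1(2) cf_rem.simps(2)[of s "2 * Suc k + 1"] fl1 A1eq inv2)
    with a show ?case by simp
  qed
  have dg1: "degree (monom (1::rat) d + [:1/2:]) = d"
    using d0 by (subst degree_add_eq_left) (simp_all add: degree_monom_eq)
  have dg2: "degree (monom (2::rat) d + [:1:]) = d"
    using d0 by (subst degree_add_eq_left) (simp_all add: degree_monom_eq)
  have degs: "degree (cf_pq s h) = d" for h
  proof (cases h)
    case 0 then show ?thesis by (simp add: cf_pq_def fl0 dg1)
  next
    case (Suc h')
    show ?thesis
    proof (cases "even h'")
      case True
      then obtain k where "h' = 2 * k" by blast
      then have "h = 2 * k + 1" using Suc by simp
      then have "cf_pq s h = fls_floor A1" using per[of k] by (simp only: cf_pq_def)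
      then show ?thesis by (simp add: fl1 dg2)
    next
      case False
      then obtain k where "h' = 2 * k + 1" using oddE by blast
      then have "h = 2 * k + 2" using Suc by simp
      then have "cf_pq s h = fls_floor sp" using per[of k] by (simp only: cf_pq_def)
      then show ?thesis by (simp add: fl2 dg2)
    qed
  qed
  define Dp where "Dp = monom (1::rat) (2 * d) + monom 1 d"
  have tD: "s * s = tpoly Dp" by (simp add: Dp_def ss tpoly_add tpoly_monom)
  define p0 where "p0 = monom (2::rat) d + [:1:]"
  define q0 where "q0 = [:2::rat:]"
  have tq0: "tpoly q0 = 1 + 1" by (simp add: q0_def tpoly_const c2)
  have u: "tpoly p0 + tpoly q0 * s = (1 + 1) * sp"
  proof -
    have "tpoly p0 = T ^ d + c + h" by (simp add: p0_def tP2)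
    then show ?thesis by (simp add: tq0 sp_def c_def algebra_simps)
  qed
  have w: "tpoly p0 - tpoly q0 * s = - ((1 + 1) * sm)"
  proof -
    have "tpoly p0 = T ^ d + c + h" by (simp add: p0_def tP2)
    then show ?thesis by (simp add: tq0 sm_def c_def algebra_simps)
  qed
  have uu: "(tpoly p0 + tpoly q0 * s) * (tpoly p0 - tpoly q0 * s) = 1"
  proof -
    have "(tpoly p0 + tpoly q0 * s) * (tpoly p0 - tpoly q0 * s) = fls_const (-4) * (sm * sp)"
      unfolding u w by (simp add: algebra_simps flip: c2 fls_const_mult_const)
    then show ?thesis by (simp only: smsp m4)
  qed
  have ub: "fls_subdegree (tpoly p0 - tpoly q0 * s) > 0"
  proof -
    have "(1 + 1 :: rat fls) = fls_const 2" by (simp add: c2)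
    then have "fls_subdegree ((1 + 1) * sm) = fls_subdegree sm" using sm0 by simp
    then show ?thesis using w ssm d0 by simp
  qed
  have "lagrange_const s = ereal (of_nat d)"
    by (rule lagrange_main[OF tD sd s0 uu ub])
  then show ?thesis using degs als by simp
qed


theorem theorem3:
  fixes d :: nat
  assumes "d > 0"
  shows "(\<forall>e::nat. e < d \<longrightarrow>
            (let \<alpha> = fls_sqrt (T ^ (2 * d) + T ^ e) in
               (\<forall>h. degree (cf_pq \<alpha> h) = (if even h then d else d - e))
               \<and> lagrange_const \<alpha> = ereal (of_nat d)))
       \<and> (let \<alpha> = fls_sqrt (T ^ (2 * d) + T ^ d) in
               (\<forall>h. degree (cf_pq \<alpha> h) = d)
               \<and> lagrange_const \<alpha> = ereal (of_nat d))"
  using case1[OF assms] case2[OF assms] by (simp add: Let_def)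

end
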